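(* Let $\lambda_1\ge0$ and $\lambda_2>0$. Let $P_n$ be the monic polynomials orthogonal with respect to $\langle f,g\rangle_F=\int_{\mathbb R}fg\,e^{-x^4}dx$, $k_n=\langle P_n,P_n\rangle_F$, and $Q_n$ the monic polynomials orthogonal with respect to $\langle f,g\rangle_S=\int_{\mathbb R}fg\,e^{-x^4}dx+\lambda_1f(0)g(0)+\lambda_2f'(0)g'(0)$, $\widehat k_n=\langle Q_n,Q_n\rangle_S$. Then $Q_0(x)=1$, $Q_1(x)=x$, for all $n\ge1$ $$xP_{2n-1}(x)=Q_{2n}(x)+a_nQ_{2n-2}(x),$$ and for all $n\ge2$ $$x^2P_n(x)=Q_{n+2}(x)+b_nQ_n(x)+\alpha_nQ_{n-2}(x),\qquad x^2Q_n(x)=P_{n+2}(x)+\sigma_nP_n(x)+\delta_nP_{n-2}(x),$$ where $a_n=\dfrac{k_{2n-1}}{\widehat k_{2n-2}}$, $\alpha_n=\dfrac{k_n}{\widehat k_{n-2}}$, $b_n=\dfrac{\langle x^2P_n,Q_n\rangle_S}{\langle Q_n,Q_n\rangle_S}$, $\delta_n=\dfrac{\widehat k_n}{k_{n-2}}$, $\sigma_n=b_n\dfrac{\widehat k_n}{k_n}$.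
   Context: All polynomials are real; monic orthogonal polynomials have degree $n$, leading coefficient $1$, and are orthogonal to all polynomials of lower degree in the respective inner product. *)

theory Defs
  imports "HOL-Analysis.Analysis" "HOL-Computational_Algebra.Polynomial"
begin

definition ipF :: "real poly \<Rightarrow> real poly \<Rightarrow> real" where
  "ipF f g = integral\<^sup>L lborel (\<lambda>x. poly f x * poly g x * exp (- (x ^ 4)))"

definition ipS :: "real \<Rightarrow> real \<Rightarrow> real poly \<Rightarrow> real poly \<Rightarrow> real" where
  "ipS l1 l2 f g = ipF f g + l1 * poly f 0 * poly g 0
                   + l2 * poly (pderiv f) 0 * poly (pderiv g) 0"

definition monic_orth :: "(real poly \<Rightarrow> real poly \<Rightarrow> real) \<Rightarrow> nat \<Rightarrow> real poly \<Rightarrow> bool" where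
  "monic_orth ip n p \<longleftrightarrow> degree p = n \<and> lead_coeff p = 1 \<and>
     (\<forall>q. degree q < n \<longrightarrow> ip p q = 0)"

end

theory Submission
  imports Defs "HOL-Probability.Distributions"
begin


lemma gauss_int: "integrable lborel (\<lambda>x::real. exp (-x\<^sup>2) * x^(2*k))"
proof -
  have "has_bochner_integral lborel (\<lambda>x::real. exp (-x\<^sup>2) * x^(2*k))
    (2 *\<^sub>R (sqrt pi / 2 * (fact (2 * k) / (2 ^ (2 * k) * fact k))))"
    by (rule has_bochner_integral_even_function[OF gaussian_moment_even_pos[where k=k]]) (simp add: power_mult)
  then show ?thesis unfolding integrable.simps by blast
qed

lemma mono_int: "integrable lborel (\<lambda>x::real. x^n * exp (-(x^4)))"
proof (rule Bochner_Integration.integrable_bound[where f="\<lambda>x. exp(1/4::real) * (exp (-x\<^sup>2) * x^(2*0) + exp(-x\<^sup>2)*x^(2*n))"])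
  show "integrable lborel (\<lambda>x::real. exp(1/4::real) * (exp (-x\<^sup>2) * x^(2*0) + exp(-x\<^sup>2)*x^(2*n)))"
  proof -
    have i: "integrable lborel (\<lambda>x::real. exp (-x\<^sup>2) * x^(2*0) + exp(-x\<^sup>2)*x^(2*n))"
      by (rule Bochner_Integration.integrable_add[OF gauss_int gauss_int])
    show ?thesis by (intro integrable_mult_right) (rule i)
  qed
  show "(\<lambda>x::real. x^n * exp (-(x^4))) \<in> borel_measurable lborel" by measurable
  show "AE x in lborel. norm ((x::real)^n * exp (-(x^4))) \<le> norm (exp(1/4::real) * (exp (-x\<^sup>2) * x^(2*0) + exp(-x\<^sup>2)*x^(2*n)))"
  proof (intro AE_I2)
    fix x :: real
    have e: "exp (-(x^4)) \<le> exp (1/4) * exp (-x\<^sup>2)"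
    proof -
      have "-(x^4) \<le> 1/4 + -x\<^sup>2" using sum_squares_ge_zero[of "x\<^sup>2 - 1/2" 0]
        by (simp add: power2_eq_square power4_eq_xxxx algebra_simps)
      then show ?thesis by (simp add: exp_add[symmetric])
    qed
    have a: "\<bar>x\<bar>^n \<le> 1 + x^(2*n)"
    proof (cases "\<bar>x\<bar> \<le> 1")
      case True then have "\<bar>x\<bar>^n \<le> 1" by (simp add: power_le_one)
      moreover have "0 \<le> x^(2*n)" by (simp add: power_mult)
      ultimately show ?thesis by linarith
    next
      case False
      then have "\<bar>x\<bar>^n \<le> \<bar>x\<bar>^(2*n)" by (intro power_increasing) auto
      also have "\<dots> = x^(2*n)" by (simp add: power_mult)
      finally show ?thesis by simp
    qed
    have "norm (x^n * exp (-(x^4))) = \<bar>x\<bar>^n * exp (-(x^4))" by (simp add: abs_mult power_abs)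
    also have "\<dots> \<le> (1 + x^(2*n)) * (exp (1/4) * exp (-x\<^sup>2))"
      by (intro mult_mono a e) auto
    also have "\<dots> = (exp(1/4::real) * (exp (-x\<^sup>2) * x^(2*0) + exp(-x\<^sup>2)*x^(2*n)))"
      by (simp only: power_0 mult_0_right mult_1_right) algebra
    also have "\<dots> = norm (exp(1/4::real) * (exp (-x\<^sup>2) * x^(2*0) + exp(-x\<^sup>2)*x^(2*n)))"
      unfolding real_norm_def by (rule abs_of_nonneg[symmetric]) (simp add: power_mult)
    finally show "norm (x^n * exp (-(x^4))) \<le> norm (exp(1/4::real) * (exp (-x\<^sup>2) * x^(2*0) + exp(-x\<^sup>2)*x^(2*n)))" .
  qed
qed

lemma poly_int: "integrable lborel (\<lambda>x::real. poly p x * exp (-(x^4)))"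
proof -
  have "(\<lambda>x::real. poly p x * exp (-(x^4))) = (\<lambda>x. \<Sum>i\<le>degree p. coeff p i * (x^i * exp (-(x^4))))"
    by (simp add: poly_altdef sum_distrib_right mult.assoc)
  moreover have "integrable lborel (\<lambda>x. \<Sum>i\<le>degree p. coeff p i * (x^i * exp (-(x^4))))"
    by (simp add: mono_int)
  ultimately show ?thesis by simp
qed

definition L :: "real poly \<Rightarrow> real" where
  "L p = integral\<^sup>L lborel (\<lambda>x. poly p x * exp (-(x^4)))"

lemma ipF_L: "ipF f g = L (f * g)"
  unfolding ipF_def L_def by (simp add: mult.assoc)

lemma L_add: "L (p + q) = L p + L q"
  unfolding L_def by (simp add: distrib_right poly_int)

lemma L_smult: "L (smult c p) = c * L p"
  unfolding L_def by (simp add: mult.assoc)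

lemma L_diff: "L (p - q) = L p - L q"
  unfolding L_def by (simp add: left_diff_distrib poly_int)

lemma L_refl: "L (p \<circ>\<^sub>p [:0,-1:]) = L p"
proof -
  have "L p = \<bar>-1\<bar> *\<^sub>R integral\<^sup>L lborel (\<lambda>x. (\<lambda>x. poly p x * exp (-(x^4))) (0 + (-1) * x))"
    unfolding L_def by (rule lborel_integral_real_affine) simp
  then show ?thesis unfolding L_def by (simp add: poly_pcompose)
qed

lemma L_nonneg: "L (p * p) \<ge> 0"
  unfolding L_def by (intro integral_nonneg_AE AE_I2) simp

lemma L_pos: assumes "p \<noteq> 0" shows "L (p * p) > 0"
proof (rule ccontr)
  assume "\<not> L (p * p) > 0"
  then have "L (p*p) = 0" using L_nonneg[of p] by linarith
  then have "AE x in lborel. poly (p*p) x * exp (-(x^4)) = 0"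
    unfolding L_def by (subst (asm) integral_nonneg_eq_0_iff_AE) (use poly_int[of "p*p"] in auto)
  then have 1: "AE x in lborel. poly p x = 0" by (auto elim!: eventually_mono)
  have fin: "finite {x. poly p x = 0}" using poly_roots_finite[OF assms] .
  have 2: "AE x in lborel. \<forall>r\<in>{x. poly p x = 0}. x \<noteq> r"
    by (rule AE_finite_allI[OF fin]) (rule AE_lborel_singleton)
  have "AE x in (lborel::real measure). False" by (rule eventually_mono[OF eventually_conj[OF 1 2]]) auto
  then have "ae_filter (lborel :: real measure) = bot" by (simp add: eventually_False)
  then have "emeasure (lborel :: real measure) (space lborel) = 0" by (simp add: ae_filter_eq_bot_iff)
  then show False by simp
qed



definition R :: "real poly \<Rightarrow> real poly" where "R p = p \<circ>\<^sub>p [:0,-1:]"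

lemma R_add: "R (p + q) = R p + R q" unfolding R_def by (simp add: pcompose_add)
lemma R_mult: "R (p * q) = R p * R q" unfolding R_def by (simp add: pcompose_mult)
lemma R_smult: "R (smult c p) = smult c (R p)" unfolding R_def by (simp add: pcompose_smult)
lemma R_R: "R (R p) = p"
proof -
  have "[:0,-1:] \<circ>\<^sub>p [:0,-1::real:] = [:0,1:]" by (simp add: pcompose_pCons)
  then show ?thesis unfolding R_def by (simp add: pcompose_assoc[symmetric])
qed
lemma degree_R: "degree (R p) = degree p" unfolding R_def by (simp add: degree_pcompose)
lemma lead_R: "lead_coeff (R p) = (-1)^degree p * lead_coeff p"
  unfolding R_def by (subst lead_coeff_comp) auto
lemma poly_R: "poly (R p) x = poly p (-x)" unfolding R_def by (simp add: poly_pcompose)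
lemma R_X: "R [:0,1:] = smult (-1) [:0,1:]" unfolding R_def by (simp add: pcompose_pCons)
lemma R_X2: "R [:0,0,1:] = [:0,0,1:]" unfolding R_def by (simp add: pcompose_pCons)
lemma pderiv_R: "poly (pderiv (R p)) 0 = - poly (pderiv p) 0"
  unfolding R_def by (simp add: pderiv_pcompose pderiv_pCons poly_pcompose)

locale ipsp =
  fixes ip :: "real poly \<Rightarrow> real poly \<Rightarrow> real"
  assumes add1: "ip (p + q) r = ip p r + ip q r"
    and smult1: "ip (smult c p) r = c * ip p r"
    and sym: "ip p q = ip q p"
    and posdef: "ip p p = 0 \<Longrightarrow> p = 0"
    and reflinv: "ip (R p) (R q) = ip p q"
begin

lemma add2: "ip r (p + q) = ip r p + ip r q" by (metis sym add1)
lemma smult2: "ip r (smult c p) = c * ip r p" by (metis sym smult1)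
lemma diff1: "ip (p - q) r = ip p r - ip q r"
proof -
  have "ip (p - q) r + ip q r = ip p r" by (metis add1 diff_add_cancel)
  then show ?thesis by simp
qed
lemma diff2: "ip r (p - q) = ip r p - ip r q" by (metis sym diff1)
lemma zero1: "ip 0 r = 0" by (metis smult1 smult_0_left mult_zero_left)
lemma zero2: "ip r 0 = 0" by (metis sym zero1)

lemma ortho_all:
  assumes deg: "\<And>j. j < m \<Longrightarrow> degree (Q j) = j \<and> lead_coeff (Q j) = 1"
    and orth: "\<And>j. j < m \<Longrightarrow> ip D (Q j) = 0"
  shows "degree q < m \<Longrightarrow> ip D q = 0"
proof (induction "degree q" arbitrary: q rule: less_induct)
  case (less q)
  define d where "d = degree q"
  define r where "r = q - smult (lead_coeff q) (Q d)"
  have "d < m" using less.prems d_def by simp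
  then have dq: "degree (Q d) = d" "lead_coeff (Q d) = 1" using deg by blast+
  have rd: "degree r \<le> d" unfolding r_def using dq d_def
    by (intro degree_diff_le) (auto intro: order.trans[OF degree_smult_le])
  have cq: "coeff (Q d) d = 1" using dq by metis
  have "coeff r d = coeff q d - lead_coeff q * coeff (Q d) d" unfolding r_def by simp
  also have "\<dots> = 0" using cq d_def by simp
  finally have rc: "coeff r d = 0" .
  have q_eq: "q = r + smult (lead_coeff q) (Q d)" unfolding r_def by simp
  have "ip D q = ip D r + lead_coeff q * ip D (Q d)" by (subst q_eq) (simp add: add2 smult2)
  also have "ip D (Q d) = 0" using orth less.prems d_def by auto
  also have "ip D r = 0"
  proof (cases "r = 0")
    case True thus ?thesis by (simp add: zero2)
  next
    case False
    then have "degree r \<noteq> d" using rc by (metis leading_coeff_0_iff)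
    then have "degree r < degree q" using rd d_def by simp
    then show ?thesis using less.hyps less.prems by simp
  qed
  finally show ?case by simp
qed

lemma zero_crit:
  assumes deg: "\<And>j. j < m \<Longrightarrow> degree (Q j) = j \<and> lead_coeff (Q j) = 1"
    and orth: "\<And>j. j < m \<Longrightarrow> ip D (Q j) = 0"
    and "degree D \<le> m" "coeff D m = 0"
  shows "D = 0"
proof (rule ccontr)
  assume "D \<noteq> 0"
  then have "degree D \<noteq> m" using assms(4) by (metis leading_coeff_0_iff)
  hence "degree D < m" using assms(3) by simp
  hence "ip D D = 0" using ortho_all[OF deg orth] by blast
  thus False using posdef \<open>D \<noteq> 0\<close> by blast
qed

lemma diff_small:
  fixes p r :: "real poly"
  assumes "degree p = n" "lead_coeff p = 1" "degree r = n" "lead_coeff r = 1"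
  shows "r - p = 0 \<or> degree (r - p) < n"
proof -
  have "degree (r - p) \<le> n" by (rule degree_diff_le) (simp_all add: assms)
  moreover have "coeff (r - p) n = 0" using assms by simp
  ultimately show ?thesis by (metis leading_coeff_0_iff le_neq_implies_less)
qed

lemma monic_ip:
  assumes "monic_orth ip n p" "degree r = n" "lead_coeff r = 1"
  shows "ip p r = ip p p"
proof -
  have o: "ip p q = 0" if "degree q < n" for q using assms(1) that unfolding monic_orth_def by auto
  have "ip p (r - p) = 0"
    using diff_small[of p n r] assms o unfolding monic_orth_def by (auto simp: zero2)
  then show ?thesis by (simp add: diff2)
qed

lemma unique:
  assumes "monic_orth ip n p" "monic_orth ip n p'"
  shows "p = p'"
proof -
  have o: "ip p q = 0" "ip p' q = 0" if "degree q < n" for q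
    using assms that unfolding monic_orth_def by auto
  have "p - p' = 0"
  proof (rule ccontr)
    assume nz: "p - p' \<noteq> 0"
    then have "degree (p - p') < n" using diff_small[of p' n p] assms unfolding monic_orth_def by auto
    then have "ip (p - p') (p - p') = 0" using o by (simp add: diff1)
    then show False using posdef nz by blast
  qed
  then show ?thesis by simp
qed

lemma parity:
  assumes "monic_orth ip n p"
  shows "R p = smult ((-1)^n) p"
proof -
  define p' where "p' = smult ((-1)^n) (R p)"
  have dp: "degree p = n" "lead_coeff p = 1" using assms unfolding monic_orth_def by auto
  have "monic_orth ip n p'"
    unfolding monic_orth_def
  proof (intro conjI allI impI)
    show "degree p' = n" unfolding p'_def using dp by (simp add: degree_R)
    show "lead_coeff p' = 1" unfolding p'_def lead_coeff_smult lead_R using dp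
      by (simp flip: power_mult_distrib)
    fix q :: "real poly" assume q: "degree q < n"
    have "ip (R p) q = ip (R p) (R (R q))" by (simp add: R_R)
    also have "\<dots> = ip p (R q)" by (rule reflinv)
    also have "\<dots> = 0" using assms q unfolding monic_orth_def by (auto simp: degree_R)
    finally show "ip p' q = 0" unfolding p'_def by (simp add: smult1)
  qed
  then have "p' = p" using unique assms by blast
  then have e: "p = smult ((-1)^n) (R p)" unfolding p'_def by simp
  have s2: "(-1::real)^n * (-1)^n = 1" by (simp flip: power_mult_distrib)
  from arg_cong[OF e, of "smult ((-1)^n)"] show ?thesis by (simp add: smult_smult s2)
qed

lemma opp:
  assumes "R f = smult u f" "R g = smult v g" "u * v = -1"
  shows "ip f g = 0"
proof -
  have "ip f g = ip (R f) (R g)" by (simp add: reflinv)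
  also have "\<dots> = v * (u * ip f g)" using assms by (simp add: smult1 smult2)
  also have "\<dots> = (u * v) * ip f g" by simp
  also have "\<dots> = - ip f g" using assms(3) by simp
  finally show ?thesis by simp
qed

lemma self_nz: "p \<noteq> 0 \<Longrightarrow> ip p p \<noteq> 0" using posdef by blast

end

interpretation F: ipsp ipF
proof
  fix p q r :: "real poly" and c :: real
  show "ipF (p + q) r = ipF p r + ipF q r" by (simp add: ipF_L distrib_right L_add)
  show "ipF (smult c p) r = c * ipF p r" by (simp add: ipF_L L_smult)
  show "ipF p q = ipF q p" by (simp add: ipF_L mult.commute)
  show "ipF p p = 0 \<Longrightarrow> p = 0" using L_pos[of p] by (auto simp: ipF_L)
  show "ipF (R p) (R q) = ipF p q" by (simp add: ipF_L flip: R_mult) (simp add: R_def L_refl)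
qed

lemma ipS_ipsp: assumes "l1 \<ge> 0" "l2 > 0" shows "ipsp (ipS l1 l2)"
proof
  fix p q r :: "real poly" and c :: real
  show "ipS l1 l2 (p + q) r = ipS l1 l2 p r + ipS l1 l2 q r"
    by (simp add: ipS_def F.add1 pderiv_add algebra_simps)
  show "ipS l1 l2 (smult c p) r = c * ipS l1 l2 p r"
    by (simp add: ipS_def F.smult1 pderiv_smult algebra_simps)
  show "ipS l1 l2 p q = ipS l1 l2 q p" by (simp add: ipS_def F.sym algebra_simps)
  show "ipS l1 l2 (R p) (R q) = ipS l1 l2 p q"
    by (simp add: ipS_def F.reflinv pderiv_R poly_R)
  assume h: "ipS l1 l2 p p = 0"
  have a: "0 \<le> l1 * poly p 0 * poly p 0" using assms by (metis mult.assoc mult_nonneg_nonneg zero_le_square)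
  have b: "0 \<le> l2 * poly (pderiv p) 0 * poly (pderiv p) 0" using assms
    by (metis mult.assoc mult_nonneg_nonneg zero_le_square less_imp_le)
  have "ipF p p \<ge> 0" using L_nonneg[of p] by (simp add: ipF_L)
  then have "ipF p p = 0" using h a b unfolding ipS_def by linarith
  then show "p = 0" by (rule F.posdef)
qed



lemma X_mult: "[:0,1:] * p = pCons 0 (p::real poly)" by simp
lemma X2_mult: "[:0,0,1:] * p = pCons 0 (pCons 0 (p::real poly))" by simp

lemma monX: "degree (p::real poly) = d \<Longrightarrow> lead_coeff p = 1 \<Longrightarrow> degree ([:0,1:] * p) = Suc d \<and> lead_coeff ([:0,1:] * p) = 1"
  by (cases "p = 0") (auto simp: X_mult)
lemma monX2: "degree (p::real poly) = d \<Longrightarrow> lead_coeff p = 1 \<Longrightarrow> degree ([:0,0,1:] * p) = Suc (Suc d) \<and> lead_coeff ([:0,0,1:] * p) = 1"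
  by (cases "p = 0") (auto simp: X2_mult)

lemma ipF_X: "ipF ([:0,1:]*f) g = ipF f ([:0,1:]*g)" unfolding ipF_L by (metis mult.assoc mult.commute)
lemma ipF_X2: "ipF ([:0,0,1:]*f) g = ipF f ([:0,0,1:]*g)" unfolding ipF_L by (metis mult.assoc mult.commute)
lemma ipS_X2: "ipS l1 l2 ([:0,0,1:]*f) g = ipF f ([:0,0,1:]*g)"
  unfolding ipS_def ipF_X2 by (simp add: pderiv_mult pderiv_pCons)
lemma ipS_X: "ipS l1 l2 ([:0,1:]*f) g = ipF f ([:0,1:]*g) + l2 * poly f 0 * poly (pderiv g) 0"
  unfolding ipS_def ipF_X by (simp add: pderiv_mult pderiv_pCons)

lemma R_Xmult: "R f = smult u f \<Longrightarrow> R ([:0,1:] * f) = smult (-u) ([:0,1:] * f)"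
  unfolding R_mult R_X by simp
lemma R_X2mult: "R f = smult u f \<Longrightarrow> R ([:0,0,1:] * f) = smult u ([:0,0,1:] * f)"
  unfolding R_mult R_X2 by simp

lemma neg1sq: "(-1::real)^m * (-1)^m = 1" by (simp flip: power_mult_distrib)

locale setting =
  fixes l1 l2 :: real and P Q :: "nat \<Rightarrow> real poly"
  assumes l1: "l1 \<ge> 0" and l2: "l2 > 0"
    and P: "\<And>n. monic_orth ipF n (P n)"
    and Q: "\<And>n. monic_orth (ipS l1 l2) n (Q n)"
begin

interpretation S: ipsp "ipS l1 l2" by (rule ipS_ipsp[OF l1 l2])

lemma degP: "degree (P n) = n" and leadP: "lead_coeff (P n) = 1"
  and orthP: "degree q < n \<Longrightarrow> ipF (P n) q = 0"
  using P[of n] unfolding monic_orth_def by auto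
lemma degQ: "degree (Q n) = n" and leadQ: "lead_coeff (Q n) = 1"
  and orthQ: "degree q < n \<Longrightarrow> ipS l1 l2 (Q n) q = 0"
  using Q[of n] unfolding monic_orth_def by auto

lemma parP: "R (P n) = smult ((-1)^n) (P n)" by (rule F.parity[OF P])
lemma parQ: "R (Q n) = smult ((-1)^n) (Q n)" by (rule S.parity[OF Q])

lemma Pnz: "P n \<noteq> 0" using leadP[of n] by auto
lemma Qnz: "Q n \<noteq> 0" using leadQ[of n] by auto
lemma kP: "ipF (P n) (P n) \<noteq> 0" using F.self_nz[OF Pnz] .
lemma kQ: "ipS l1 l2 (Q n) (Q n) \<noteq> 0" using S.self_nz[OF Qnz] .

lemma orthQQ: "i \<noteq> j \<Longrightarrow> ipS l1 l2 (Q i) (Q j) = 0"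
  by (metis S.sym orthQ degQ linorder_neq_iff)
lemma orthPP: "i \<noteq> j \<Longrightarrow> ipF (P i) (P j) = 0"
  by (metis F.sym orthP degP linorder_neq_iff)

lemma degsQ: "j < m \<Longrightarrow> degree (Q j) = j \<and> lead_coeff (Q j) = 1" by (metis degQ leadQ)
lemma degsP: "j < m \<Longrightarrow> degree (P j) = j \<and> lead_coeff (P j) = 1" by (metis degP leadP)

lemma Q0: "Q 0 = 1"
proof -
  have "Q 0 - 1 = 0"
  proof (rule S.zero_crit[of 0 Q])
    show "degree (Q 0 - 1) \<le> 0" by (rule degree_diff_le) (simp_all add: degQ)
    have "coeff (Q 0) 0 = 1" using leadQ[of 0] degQ[of 0] by simp
    then show "coeff (Q 0 - 1) 0 = 0" by simp
  qed auto
  then show ?thesis by simp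
qed

lemma Q1: "Q 1 = [:0,1:]"
proof -
  have "Q 1 - [:0,1:] = 0"
  proof (rule S.zero_crit[of 1 Q])
    show "\<And>j. j < 1 \<Longrightarrow> degree (Q j) = j \<and> lead_coeff (Q j) = 1" by (rule degsQ)
    show "degree (Q 1 - [:0,1:]) \<le> 1" by (rule degree_diff_le) (simp_all add: degQ)
    have "coeff (Q 1) 1 = 1" using leadQ[of 1] degQ[of 1] by simp
    then show "coeff (Q 1 - [:0,1:]) 1 = 0" by simp
    fix j :: nat assume "j < 1"
    then have j: "j = 0" by simp
    have "ipS l1 l2 [:0,1:] (Q 0) = 0"
      by (rule S.opp[where u="-1" and v=1]) (simp_all add: R_X parQ)
    then show "ipS l1 l2 (Q 1 - [:0,1:]) (Q j) = 0" using j by (simp add: S.diff1 orthQQ)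
  qed
  then show ?thesis by simp
qed

end


context setting
begin

interpretation S: ipsp "ipS l1 l2" by (rule ipS_ipsp[OF l1 l2])

lemma id1:
  assumes "odd m"
  shows "[:0,1:] * P m = Q (Suc m) + smult (ipF (P m) (P m) / ipS l1 l2 (Q (m-1)) (Q (m-1))) (Q (m-1))"
proof -
  define c where "c = ipF (P m) (P m) / ipS l1 l2 (Q (m-1)) (Q (m-1))"
  define D where "D = [:0,1:] * P m - Q (Suc m) - smult c (Q (m-1))"
  have m1: "m \<ge> 1" using assms by (cases m) auto
  have "poly (R (P m)) 0 = poly (P m) 0" by (simp add: poly_R)
  moreover have "poly (R (P m)) 0 = - poly (P m) 0" using assms by (simp add: parP)
  ultimately have P0: "poly (P m) 0 = 0" by simp
  have XP: "ipS l1 l2 ([:0,1:]*P m) q = ipF (P m) ([:0,1:] * q)" for q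
    unfolding ipS_X using P0 by simp
  have mX: "degree ([:0,1:] * P m) = Suc m \<and> lead_coeff ([:0,1:] * P m) = 1"
    by (rule monX[OF degP leadP])
  have "D = 0"
  proof (rule S.zero_crit[of "Suc m" Q])
    show "\<And>j. j < Suc m \<Longrightarrow> degree (Q j) = j \<and> lead_coeff (Q j) = 1" by (rule degsQ)
    have d1: "degree (smult c (Q (m-1))) \<le> Suc m"
      by (rule order.trans[OF degree_smult_le]) (simp add: degQ)
    show "degree D \<le> Suc m" unfolding D_def
      by (intro degree_diff_le d1) (simp_all add: mX degQ degP)
    have c1: "coeff ([:0,1:] * P m) (Suc m) = 1" using mX by metis
    have c2: "coeff (Q (Suc m)) (Suc m) = 1" by (metis degQ leadQ)
    have c3: "coeff (Q (m-1)) (Suc m) = 0" by (rule coeff_eq_0) (simp add: degQ)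
    show "coeff D (Suc m) = 0" unfolding D_def coeff_diff coeff_smult c1 c2 c3 by simp
    fix j assume j: "j < Suc m"
    have "ipS l1 l2 D (Q j) = ipF (P m) ([:0,1:] * Q j) - ipS l1 l2 (Q (Suc m)) (Q j)
        - c * ipS l1 l2 (Q (m-1)) (Q j)"
      unfolding D_def S.diff1 S.smult1 XP ..
    also have "ipS l1 l2 (Q (Suc m)) (Q j) = 0" using j by (intro orthQQ) simp
    finally have e: "ipS l1 l2 D (Q j) = ipF (P m) ([:0,1:] * Q j) - c * ipS l1 l2 (Q (m-1)) (Q j)"
      by simp
    consider "j < m - 1" | "j = m - 1" | "j = m" using j by linarith
    then show "ipS l1 l2 D (Q j) = 0"
    proof cases
      case 1
      have "degree ([:0,1:] * Q j) < m" using monX[OF degQ leadQ, of j] 1 by simp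
      then have "ipF (P m) ([:0,1:] * Q j) = 0" by (rule orthP)
      moreover have "ipS l1 l2 (Q (m-1)) (Q j) = 0" using 1 by (intro orthQQ) simp
      ultimately show ?thesis using e by simp
    next
      case 2
      have sj: "Suc j = m" using 2 m1 by simp
      have "degree ([:0,1:] * Q j) = m \<and> lead_coeff ([:0,1:] * Q j) = 1"
        using monX[OF degQ leadQ, of j] unfolding sj .
      then have "ipF (P m) ([:0,1:] * Q j) = ipF (P m) (P m)"
        using F.monic_ip[OF P] by blast
      then show ?thesis using e 2 kQ[of "m-1"] unfolding c_def by simp
    next
      case 3
      have "ipF (P m) ([:0,1:] * Q j) = 0"
        by (rule F.opp[OF parP R_Xmult[OF parQ]]) (simp add: 3 neg1sq)
      moreover have "ipS l1 l2 (Q (m-1)) (Q j) = 0" using 3 m1 by (intro orthQQ) simp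
      ultimately show ?thesis using e by simp
    qed
  qed
  then show ?thesis unfolding D_def c_def by (simp add: diff_diff_eq)
qed


lemma pm1: "n \<ge> 1 \<Longrightarrow> (-1::real)^n * (-1)^(n-1) = -1"
  by (cases n) (auto simp: neg1sq)

lemma id2:
  assumes n2: "n \<ge> 2"
  shows "[:0,0,1:] * P n = Q (n+2) + smult (ipS l1 l2 ([:0,0,1:] * P n) (Q n) / ipS l1 l2 (Q n) (Q n)) (Q n)
     + smult (ipF (P n) (P n) / ipS l1 l2 (Q (n-2)) (Q (n-2))) (Q (n-2))"
proof -
  define b where "b = ipS l1 l2 ([:0,0,1:] * P n) (Q n) / ipS l1 l2 (Q n) (Q n)"
  define a where "a = ipF (P n) (P n) / ipS l1 l2 (Q (n-2)) (Q (n-2))"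
  define D where "D = [:0,0,1:] * P n - Q (n+2) - smult b (Q n) - smult a (Q (n-2))"
  have XP: "ipS l1 l2 ([:0,0,1:]*P n) q = ipF (P n) ([:0,0,1:] * q)" for q
    by (rule ipS_X2)
  have mX: "degree ([:0,0,1:] * P n) = n+2 \<and> lead_coeff ([:0,0,1:] * P n) = 1"
    unfolding add_2_eq_Suc' by (rule monX2[OF degP leadP])
  have parX: "R ([:0,0,1:] * P n) = smult ((-1)^n) ([:0,0,1:] * P n)" by (rule R_X2mult[OF parP])
  have "D = 0"
  proof (rule S.zero_crit[of "n+2" Q])
    show "\<And>j. j < n+2 \<Longrightarrow> degree (Q j) = j \<and> lead_coeff (Q j) = 1" by (rule degsQ)
    have d1: "degree (smult b (Q n)) \<le> n+2"
      by (rule order.trans[OF degree_smult_le]) (simp add: degQ)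
    have d2: "degree (smult a (Q (n-2))) \<le> n+2"
      by (rule order.trans[OF degree_smult_le]) (simp add: degQ)
    show "degree D \<le> n+2" unfolding D_def
      by (intro degree_diff_le d1 d2) (simp_all add: mX degQ degP)
    have c1: "coeff ([:0,0,1:] * P n) (n+2) = 1" using mX by metis
    have c2: "coeff (Q (n+2)) (n+2) = 1" by (metis degQ leadQ)
    have c3: "coeff (Q n) (n+2) = 0" by (rule coeff_eq_0) (simp add: degQ)
    have c4: "coeff (Q (n-2)) (n+2) = 0" by (rule coeff_eq_0) (simp add: degQ)
    show "coeff D (n+2) = 0" unfolding D_def coeff_diff coeff_smult c1 c2 c3 c4 by simp
    fix j assume j: "j < n+2"
    have "ipS l1 l2 D (Q j) = ipS l1 l2 ([:0,0,1:] * P n) (Q j) - ipS l1 l2 (Q (n+2)) (Q j)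
        - b * ipS l1 l2 (Q n) (Q j) - a * ipS l1 l2 (Q (n-2)) (Q j)"
      unfolding D_def S.diff1 S.smult1 ..
    also have "ipS l1 l2 (Q (n+2)) (Q j) = 0" using j by (intro orthQQ) simp
    finally have e: "ipS l1 l2 D (Q j) = ipS l1 l2 ([:0,0,1:] * P n) (Q j)
        - b * ipS l1 l2 (Q n) (Q j) - a * ipS l1 l2 (Q (n-2)) (Q j)"
      by simp
    consider "j < n - 2" | "j = n - 2" | "j = n - 1" | "j = n" | "j = n + 1" using j by linarith
    then show "ipS l1 l2 D (Q j) = 0"
    proof cases
      case 1
      have "degree ([:0,0,1:] * Q j) < n" using monX2[OF degQ leadQ, of j] 1 by simp
      then have "ipS l1 l2 ([:0,0,1:] * P n) (Q j) = 0" unfolding XP by (rule orthP)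
      moreover have "ipS l1 l2 (Q n) (Q j) = 0" using 1 by (intro orthQQ) simp
      moreover have "ipS l1 l2 (Q (n-2)) (Q j) = 0" using 1 by (intro orthQQ) simp
      ultimately show ?thesis using e by simp
    next
      case 2
      have sj: "Suc (Suc j) = n" using 2 n2 by simp
      have "degree ([:0,0,1:] * Q j) = n \<and> lead_coeff ([:0,0,1:] * Q j) = 1"
        using monX2[OF degQ leadQ, of j] unfolding sj .
      then have "ipS l1 l2 ([:0,0,1:] * P n) (Q j) = ipF (P n) (P n)"
        unfolding XP using F.monic_ip[OF P] by blast
      moreover have "ipS l1 l2 (Q n) (Q j) = 0" using 2 n2 by (intro orthQQ) simp
      ultimately show ?thesis using e 2 kQ[of "n-2"] unfolding a_def by simp
    next
      case 3
      have "ipS l1 l2 ([:0,0,1:] * P n) (Q j) = 0"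
        by (rule S.opp[OF parX parQ]) (use 3 n2 pm1[of n] in simp)
      moreover have "ipS l1 l2 (Q n) (Q j) = 0" using 3 n2 by (intro orthQQ) simp
      moreover have "ipS l1 l2 (Q (n-2)) (Q j) = 0" using 3 n2 by (intro orthQQ) simp
      ultimately show ?thesis using e by simp
    next
      case 4
      have "ipS l1 l2 (Q (n-2)) (Q j) = 0" using 4 n2 by (intro orthQQ) simp
      then show ?thesis using e 4 kQ[of n] unfolding b_def by simp
    next
      case 5
      have "ipS l1 l2 ([:0,0,1:] * P n) (Q j) = 0"
        by (rule S.opp[OF parX parQ]) (simp add: 5 neg1sq)
      moreover have "ipS l1 l2 (Q n) (Q j) = 0" using 5 by (intro orthQQ) simp
      moreover have "ipS l1 l2 (Q (n-2)) (Q j) = 0" using 5 n2 by (intro orthQQ) simp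
      ultimately show ?thesis using e by simp
    qed
  qed
  then show ?thesis unfolding D_def a_def b_def by (simp add: diff_diff_eq)
qed

lemma id3:
  assumes n2: "n \<ge> 2"
  shows "[:0,0,1:] * Q n = P (n+2)
     + smult (ipS l1 l2 ([:0,0,1:] * P n) (Q n) / ipS l1 l2 (Q n) (Q n) * (ipS l1 l2 (Q n) (Q n) / ipF (P n) (P n))) (P n)
     + smult (ipS l1 l2 (Q n) (Q n) / ipF (P (n-2)) (P (n-2))) (P (n-2))"
proof -
  define s where "s = ipS l1 l2 ([:0,0,1:] * P n) (Q n) / ipS l1 l2 (Q n) (Q n) * (ipS l1 l2 (Q n) (Q n) / ipF (P n) (P n))"
  define d where "d = ipS l1 l2 (Q n) (Q n) / ipF (P (n-2)) (P (n-2))"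
  define D where "D = [:0,0,1:] * Q n - P (n+2) - smult s (P n) - smult d (P (n-2))"
  have XQ: "ipF ([:0,0,1:]*Q n) (P j) = ipS l1 l2 ([:0,0,1:]*P j) (Q n)" for j
    unfolding ipS_X2 by (metis F.sym ipF_X2)
  have mX: "degree ([:0,0,1:] * Q n) = n+2 \<and> lead_coeff ([:0,0,1:] * Q n) = 1"
    unfolding add_2_eq_Suc' by (rule monX2[OF degQ leadQ])
  have parX: "R ([:0,0,1:] * Q n) = smult ((-1)^n) ([:0,0,1:] * Q n)" by (rule R_X2mult[OF parQ])
  have "D = 0"
  proof (rule F.zero_crit[of "n+2" P])
    show "\<And>j. j < n+2 \<Longrightarrow> degree (P j) = j \<and> lead_coeff (P j) = 1" by (rule degsP)
    have d1: "degree (smult s (P n)) \<le> n+2"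
      by (rule order.trans[OF degree_smult_le]) (simp add: degP)
    have d2: "degree (smult d (P (n-2))) \<le> n+2"
      by (rule order.trans[OF degree_smult_le]) (simp add: degP)
    show "degree D \<le> n+2" unfolding D_def
      by (intro degree_diff_le d1 d2) (simp_all add: mX degQ degP)
    have c1: "coeff ([:0,0,1:] * Q n) (n+2) = 1" using mX by metis
    have c2: "coeff (P (n+2)) (n+2) = 1" by (metis degP leadP)
    have c3: "coeff (P n) (n+2) = 0" by (rule coeff_eq_0) (simp add: degP)
    have c4: "coeff (P (n-2)) (n+2) = 0" by (rule coeff_eq_0) (simp add: degP)
    show "coeff D (n+2) = 0" unfolding D_def coeff_diff coeff_smult c1 c2 c3 c4 by simp
    fix j assume j: "j < n+2"
    have "ipF D (P j) = ipF ([:0,0,1:] * Q n) (P j) - ipF (P (n+2)) (P j)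
        - s * ipF (P n) (P j) - d * ipF (P (n-2)) (P j)"
      unfolding D_def F.diff1 F.smult1 ..
    also have "ipF (P (n+2)) (P j) = 0" using j by (intro orthPP) simp
    finally have e: "ipF D (P j) = ipF ([:0,0,1:] * Q n) (P j)
        - s * ipF (P n) (P j) - d * ipF (P (n-2)) (P j)"
      by simp
    consider "j < n - 2" | "j = n - 2" | "j = n - 1" | "j = n" | "j = n + 1" using j by linarith
    then show "ipF D (P j) = 0"
    proof cases
      case 1
      have "degree ([:0,0,1:] * P j) < n" using monX2[OF degP leadP, of j] 1 by simp
      then have "ipS l1 l2 (Q n) ([:0,0,1:] * P j) = 0" by (rule orthQ)
      then have "ipF ([:0,0,1:] * Q n) (P j) = 0" unfolding XQ by (metis S.sym)
      moreover have "ipF (P n) (P j) = 0" using 1 by (intro orthPP) simp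
      moreover have "ipF (P (n-2)) (P j) = 0" using 1 by (intro orthPP) simp
      ultimately show ?thesis using e by simp
    next
      case 2
      have sj: "Suc (Suc j) = n" using 2 n2 by simp
      have "degree ([:0,0,1:] * P j) = n \<and> lead_coeff ([:0,0,1:] * P j) = 1"
        using monX2[OF degP leadP, of j] unfolding sj .
      then have "ipS l1 l2 (Q n) ([:0,0,1:] * P j) = ipS l1 l2 (Q n) (Q n)"
        using S.monic_ip[OF Q] by blast
      then have "ipF ([:0,0,1:] * Q n) (P j) = ipS l1 l2 (Q n) (Q n)" unfolding XQ by (metis S.sym)
      moreover have "ipF (P n) (P j) = 0" using 2 n2 by (intro orthPP) simp
      ultimately show ?thesis using e 2 kP[of "n-2"] unfolding d_def by simp
    next
      case 3
      have "ipF ([:0,0,1:] * Q n) (P j) = 0"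
        by (rule F.opp[OF parX parP]) (use 3 n2 pm1[of n] in simp)
      moreover have "ipF (P n) (P j) = 0" using 3 n2 by (intro orthPP) simp
      moreover have "ipF (P (n-2)) (P j) = 0" using 3 n2 by (intro orthPP) simp
      ultimately show ?thesis using e by simp
    next
      case 4
      have "ipF (P (n-2)) (P j) = 0" using 4 n2 by (intro orthPP) simp
      moreover have "ipF ([:0,0,1:] * Q n) (P j) = ipS l1 l2 ([:0,0,1:] * P n) (Q n)"
        unfolding XQ 4 ..
      ultimately show ?thesis using e 4 kP[of n] kQ[of n] unfolding s_def by simp
    next
      case 5
      have "ipF ([:0,0,1:] * Q n) (P j) = 0"
        by (rule F.opp[OF parX parP]) (simp add: 5 neg1sq)
      moreover have "ipF (P n) (P j) = 0" using 5 by (intro orthPP) simp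
      moreover have "ipF (P (n-2)) (P j) = 0" using 5 n2 by (intro orthPP) simp
      ultimately show ?thesis using e by simp
    qed
  qed
  then show ?thesis unfolding D_def s_def d_def by (simp add: diff_diff_eq)
qed

end
theorem mainTheorem6:
  fixes l1 l2 :: real and P Q :: "nat \<Rightarrow> real poly"
  assumes "l1 \<ge> 0" and "l2 > 0"
    and P: "\<And>n. monic_orth ipF n (P n)"
    and Q: "\<And>n. monic_orth (ipS l1 l2) n (Q n)"
  defines "k \<equiv> \<lambda>n. ipF (P n) (P n)"
    and "kh \<equiv> \<lambda>n. ipS l1 l2 (Q n) (Q n)"
  defines "a \<equiv> \<lambda>n. k (2*n - 1) / kh (2*n - 2)"
    and "\<alpha> \<equiv> \<lambda>n. k n / kh (n - 2)"
    and "b \<equiv> \<lambda>n. ipS l1 l2 ([:0,0,1:] * P n) (Q n) / ipS l1 l2 (Q n) (Q n)"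
    and "\<delta> \<equiv> \<lambda>n. kh n / k (n - 2)"
  defines "\<sigma> \<equiv> \<lambda>n. b n * (kh n / k n)"
  shows "Q 0 = 1 \<and> Q 1 = [:0,1:]
    \<and> (\<forall>n\<ge>1. [:0,1:] * P (2*n - 1) = Q (2*n) + smult (a n) (Q (2*n - 2)))
    \<and> (\<forall>n\<ge>2. [:0,0,1:] * P n = Q (n+2) + smult (b n) (Q n) + smult (\<alpha> n) (Q (n - 2)))
    \<and> (\<forall>n\<ge>2. [:0,0,1:] * Q n = P (n+2) + smult (\<sigma> n) (P n) + smult (\<delta> n) (P (n - 2)))"
  proof -
  interpret setting l1 l2 P Q by (rule setting.intro) (use assms P Q in auto)
  have i1: "\<forall>n\<ge>1. [:0,1:] * P (2*n - 1) = Q (2*n) + smult (ipF (P (2*n-1)) (P (2*n-1)) / ipS l1 l2 (Q (2*n-2)) (Q (2*n-2))) (Q (2*n - 2))"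
  proof (intro allI impI)
    fix n :: nat assume "n \<ge> 1"
    then have o: "odd (2*n-1)" and e1: "Suc (2*n-1) = 2*n" and e2: "2*n-1-1 = 2*n-2" by auto
    show "[:0,1:] * P (2*n - 1) = Q (2*n) + smult (ipF (P (2*n-1)) (P (2*n-1)) / ipS l1 l2 (Q (2*n-2)) (Q (2*n-2))) (Q (2*n - 2))"
      using id1[OF o] unfolding e1 e2 .
  qed
  show ?thesis
    unfolding \<sigma>_def \<delta>_def b_def \<alpha>_def a_def kh_def k_def
    using Q0 Q1 i1 id2 id3 by simp
qed

end
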